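(* Let $\mathcal{K}\subset\mathbb{R}^l$ be a closed convex cone with non-empty interior, with dual cone $\mathcal{K}^*=\{y\mid y^\top x\ge 0\ \forall x\in\mathcal{K}\}$, and write $a\preceq_{\mathcal{K}} b$ for $b-a\in\mathcal{K}$. Let $G,G^i\in\mathbb{R}^{l\times n}$ and $g,g^i\in\mathbb{R}^l$ be such that the sets $\{y\in\mathbb{R}^n\mid Gy\preceq_{\mathcal{K}} g\}$ and $\{y\in\mathbb{R}^n\mid G^iy\preceq_{\mathcal{K}} g^i\}$ are non-empty, convex and compact. Let $R,R^i\in\mathbb{R}^{n\times n}$ be rotation matrices and $p,p^i\in\mathbb{R}^n$ positions, and define $$\mathbb{S}=\{z\in\mathbb{R}^n\mid \exists y\in\mathbb{R}^n:\ Gy\preceq_{\mathcal{K}} g,\ z=Ry+p\},\qquad \mathbb{S}^i=\{z\in\mathbb{R}^n\mid \exists y\in\mathbb{R}^n:\ G^iy\preceq_{\mathcal{K}} g^i,\ z=R^iy+p^i\},$$ and $\mathrm{dist}(\mathbb{S},\mathbb{S}^i)=\min_{z_1\in\mathbb{S},\,z_2\in\mathbb{S}^i}\|z_1-z_2\|_2$. Then $\mathrm{dist}(\mathbb{S},\mathbb{S}^i)>0$ if and only if there exist $\lambda,\nu\in\mathcal{K}^*$ such that $$-\lambda^\top\big(GR^\top(p-p^i)+g\big)-\nu^\top g^i>0,\qquad \|\lambda^\top G R^\top\|_2\le 1,\qquad \lambda^\top GR^\top=-\nu^\top G^iR^{i\top}.$$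
   Context: In the paper, $\mathbb{S}$ is the region occupied by the controlled agent and $\mathbb{S}^i$ the region occupied by the $i$-th obstacle at a given prediction time step, with positions $p=Cx+c$ and $p^i=Co^i$ obtained from the states; here the positions are treated as given vectors. *)

theory Defs
  imports "HOL-Analysis.Analysis"
begin

definition dual_cone :: "(real^'l) set \<Rightarrow> (real^'l) set" where
  "dual_cone K = {y. \<forall>x\<in>K. y \<bullet> x \<ge> 0}"

definition cone_le :: "(real^'l) set \<Rightarrow> real^'l \<Rightarrow> real^'l \<Rightarrow> bool" where
  "cone_le K a b \<longleftrightarrow> b - a \<in> K"

definition conic_set :: "(real^'l) set \<Rightarrow> real^'n^'l \<Rightarrow> real^'l \<Rightarrow> (real^'n) set" where
  "conic_set K G g = {y. cone_le K (G *v y) g}"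

definition body_region :: "(real^'l) set \<Rightarrow> real^'n^'l \<Rightarrow> real^'l \<Rightarrow> real^'n^'n \<Rightarrow> real^'n \<Rightarrow> (real^'n) set" where
  "body_region K G g R p = {z. \<exists>y. cone_le K (G *v y) g \<and> z = R *v y + p}"

end

theory Submission
  imports Defs
begin

lemma rot_orth:
  fixes R :: "real^'n^'n"
  assumes "rotation_matrix R"
  shows "transpose R ** R = mat 1" "R ** transpose R = mat 1"
  using assms by (auto simp: rotation_matrix_def orthogonal_matrix_def)

lemma rot_inv:
  fixes R :: "real^'n^'n"
  assumes "rotation_matrix R"
  shows "transpose R *v (R *v y) = y" "R *v (transpose R *v y) = y"
  using rot_orth[OF assms] by (metis matrix_vector_mul_assoc matrix_vector_mul_lid)+

lemma mem_region:
  fixes R :: "real^'n^'n"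
  assumes "rotation_matrix R"
  shows "z \<in> body_region K G g R p \<longleftrightarrow> g - G *v (transpose R *v (z - p)) \<in> K"
proof
  assume "z \<in> body_region K G g R p"
  then obtain y where "g - G *v y \<in> K" "z = R *v y + p"
    by (auto simp: body_region_def cone_le_def)
  then show "g - G *v (transpose R *v (z - p)) \<in> K" using rot_inv[OF assms] by simp
next
  assume h: "g - G *v (transpose R *v (z - p)) \<in> K"
  have "z = R *v (transpose R *v (z - p)) + p" using rot_inv[OF assms] by simp
  with h show "z \<in> body_region K G g R p"
    unfolding body_region_def cone_le_def by blast
qed

lemma region_image: "body_region K G g R p = (\<lambda>y. R *v y + p) ` conic_set K G g"
  by (auto simp: body_region_def conic_set_def)

lemma region_compact:
  assumes "compact (conic_set K G g)"
  shows "compact (body_region K G g R p)"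
  unfolding region_image
  apply (rule compact_continuous_image[OF _ assms])
  by (intro continuous_intros linear_continuous_on)

lemma cone_add:
  assumes "convex K" "cone K" "x \<in> K" "y \<in> K"
  shows "x + y \<in> K"
proof -
  have "(1/2) *\<^sub>R x + (1/2) *\<^sub>R y \<in> K"
    using assms(1,3,4) by (simp add: convex_def)
  then have "2 *\<^sub>R ((1/2) *\<^sub>R x + (1/2) *\<^sub>R y) \<in> K"
    using assms(2) by (simp add: cone_def)
  then show ?thesis by (simp add: scaleR_add_right)
qed

lemma recession_zero:
  fixes K :: "(real^'l) set" and G :: "real^'n^'l"
  assumes "convex K" "cone K" "compact (conic_set K G g)" "conic_set K G g \<noteq> {}"
    and "- (G *v v) \<in> K"
  shows "v = 0"
proof (rule ccontr)
  assume v: "v \<noteq> 0"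
  obtain y0 where y0: "y0 \<in> conic_set K G g" using assms(4) by blast
  obtain B where B: "\<And>y. y \<in> conic_set K G g \<Longrightarrow> norm y \<le> B"
    using compact_imp_bounded[OF assms(3)] bounded_iff by blast
  define t where "t = (B + norm y0 + 1) / norm v"
  have nv: "norm v > 0" using v by simp
  have B0: "B \<ge> 0" using B[OF y0] norm_ge_zero[of y0] by linarith
  have t0: "t \<ge> 0" unfolding t_def using nv B0 by simp
  have "g - G *v (y0 + t *\<^sub>R v) = (g - G *v y0) + t *\<^sub>R (- (G *v v))"
    by (simp add: matrix_vector_right_distrib matrix_vector_mult_scaleR algebra_simps)
  moreover have "g - G *v y0 \<in> K" using y0 by (simp add: conic_set_def cone_le_def)
  moreover have "t *\<^sub>R (- (G *v v)) \<in> K" using assms(2,5) t0 unfolding cone_def by blast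
  ultimately have "g - G *v (y0 + t *\<^sub>R v) \<in> K" using cone_add assms(1,2) by metis
  then have "y0 + t *\<^sub>R v \<in> conic_set K G g" by (simp add: conic_set_def cone_le_def)
  then have b1: "norm (y0 + t *\<^sub>R v) \<le> B" by (rule B)
  have "norm (t *\<^sub>R v) \<le> norm (y0 + t *\<^sub>R v) + norm y0"
    using norm_triangle_ineq4[of "y0 + t *\<^sub>R v" y0] by simp
  moreover have "norm (t *\<^sub>R v) = B + norm y0 + 1"
    using t0 nv B0 by (simp add: t_def)
  ultimately show False using b1 by linarith
qed

lemma conic_sep:
  fixes K :: "(real^'l) set" and M1 M2 :: "real^'n^'l" and c1 c2 :: "real^'l"
  assumes Kc: "closed K" and Kv: "convex K" and Kn: "cone K" and Ke: "K \<noteq> {}"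
    and infeas: "\<And>z. \<not> (c1 - M1 *v z \<in> K \<and> c2 - M2 *v z \<in> K)"
    and rec: "\<And>v. - (M1 *v v) \<in> K \<Longrightarrow> v = 0"
  shows "\<exists>lam\<in>dual_cone K. \<exists>nu\<in>dual_cone K. lam v* M1 + nu v* M2 = 0 \<and> lam \<bullet> c1 + nu \<bullet> c2 < 0"
proof -
  define Q where "Q = K \<times> K"
  define L where "L z = (- (M1 *v z), - (M2 *v z))" for z :: "real^'n"
  define c where "c = (c1, c2)"
  have K0: "0 \<in> K" using Kn Ke cone_contains_0 by blast
  have Qc: "closed Q" unfolding Q_def using Kc by (simp add: closed_Times)
  have Qe: "Q \<noteq> {}" unfolding Q_def using Ke by simp
  have Q0: "0 \<in> Q" unfolding Q_def using K0 by (simp add: zero_prod_def)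
  have Qcone: "t *\<^sub>R w \<in> Q" if "w \<in> Q" "t \<ge> 0" for t w
    using that Kn unfolding Q_def cone_def by (cases w) auto
  have Qconv: "convex Q" unfolding Q_def using Kv by (simp add: convex_Times)
  have linL: "linear L"
    unfolding linear_iff L_def
    by (simp add: matrix_vector_right_distrib matrix_vector_mult_scaleR)
  have notQ: "c + L z \<notin> Q" for z
    using infeas[of z] unfolding Q_def L_def c_def by simp
  have recQ: "L d \<in> Q \<Longrightarrow> d = 0" for d
    using rec unfolding Q_def L_def by auto
  have contL: "continuous_on S (\<lambda>d. infdist (c + L d) Q)" for S and c
    using linL by (intro continuous_at_imp_continuous_on ballI continuous_infdist continuous_intros linear_continuous_at) (auto simp: linear_conv_bounded_linear)
  obtain d0 where d0: "d0 \<in> sphere (0::real^'n) 1"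
    and d0min: "\<And>d. d \<in> sphere 0 1 \<Longrightarrow> infdist (0 + L d0) Q \<le> infdist (0 + L d) Q"
    using continuous_attains_inf[OF compact_sphere _ contL[of "sphere 0 1" 0]]
    by (metis sphere_eq_empty zero_less_one not_less_iff_gr_or_eq)
  define \<delta> where "\<delta> = infdist (L d0) Q"
  have d0nz: "d0 \<noteq> 0" using d0 by auto
  have \<delta>pos: "\<delta> > 0" unfolding \<delta>_def
    using infdist_pos_not_in_closed[OF Qc Qe] recQ d0nz by blast
  define r where "r = (norm c + 1) / \<delta>"
  have outside: "dist (c + L z) w \<ge> 1" if z: "norm z \<ge> r" and w: "w \<in> Q" for z w
  proof -
    have r0: "r > 0" unfolding r_def using \<delta>pos by (metis add_nonneg_pos divide_pos_pos norm_ge_zero zero_less_one)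
    define t where "t = norm z"
    have t0: "t > 0" using z r0 unfolding t_def by linarith
    define d where "d = (1 / t) *\<^sub>R z"
    define w' where "w' = (1 / t) *\<^sub>R w"
    have dS: "d \<in> sphere 0 1" using t0 by (simp add: d_def t_def)
    have w'Q: "w' \<in> Q" using Qcone[OF w] t0 by (simp add: w'_def)
    have "\<delta> \<le> infdist (L d) Q" using d0min[OF dS] by (simp add: \<delta>_def)
    also have "\<dots> \<le> dist (L d) w'" using w'Q by (rule infdist_le)
    finally have dd: "\<delta> \<le> norm (L d - w')" by (simp add: dist_norm)
    have Lz: "L z = t *\<^sub>R L d" using t0 linear_cmul[OF linL, of t d] by (simp add: d_def)
    have ww: "w = t *\<^sub>R w'" using t0 by (simp add: w'_def)
    have eq: "c + L z - w = c + t *\<^sub>R (L d - w')" by (simp add: Lz ww scaleR_diff_right)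
    have "norm (t *\<^sub>R (L d - w')) \<le> norm (c + t *\<^sub>R (L d - w')) + norm c"
      using norm_triangle_ineq4[of "c + t *\<^sub>R (L d - w')" c] by simp
    moreover have "norm (t *\<^sub>R (L d - w')) = t * norm (L d - w')" using t0 by simp
    moreover have "t * norm (L d - w') \<ge> r * \<delta>"
      using mult_mono[of r t \<delta> "norm (L d - w')"] dd z t0 \<delta>pos unfolding t_def by linarith
    moreover have "r * \<delta> = norm c + 1" unfolding r_def using \<delta>pos by simp
    ultimately have "norm (c + t *\<^sub>R (L d - w')) \<ge> 1" by linarith
    then have "norm (c + L z - w) \<ge> 1" by (subst eq)
    then show ?thesis by (simp add: dist_norm)
  qed
  obtain z0 where z0: "z0 \<in> cball (0::real^'n) r"
    and z0min: "\<And>z. z \<in> cball 0 r \<Longrightarrow> infdist (c + L z0) Q \<le> infdist (c + L z) Q"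
    using continuous_attains_inf[OF compact_cball _ contL[of "cball 0 r" c]]
      \<delta>pos unfolding r_def
    by (metis cball_eq_empty divide_nonneg_pos linorder_not_less norm_ge_zero add_nonneg_nonneg zero_le_one less_imp_le)
  define \<epsilon> where "\<epsilon> = min 1 (infdist (c + L z0) Q)"
  have \<epsilon>pos: "\<epsilon> > 0" unfolding \<epsilon>_def
    using infdist_pos_not_in_closed[OF Qc Qe notQ] by simp
  have bound: "dist (c + L z) w \<ge> \<epsilon>" if "w \<in> Q" for z w
  proof (cases "norm z \<ge> r")
    case True then show ?thesis using outside[OF True that] \<epsilon>_def by linarith
  next
    case False
    then have "z \<in> cball 0 r" by simp
    then have "infdist (c + L z0) Q \<le> infdist (c + L z) Q" by (rule z0min)
    also have "\<dots> \<le> dist (c + L z) w" using that by (rule infdist_le)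
    finally show ?thesis unfolding \<epsilon>_def by linarith
  qed
  define C where "C = {c + L z - w | z w. w \<in> Q}"
  have convC: "convex C"
    unfolding convex_def C_def
  proof (intro ballI allI impI, elim exE conjE CollectE)
    fix x y :: "(real^'l) \<times> (real^'l)" and u v :: real and z1 w1 z2 w2
    assume uv: "0 \<le> u" "0 \<le> v" "u + v = 1" and x: "x = c + L z1 - w1" "w1 \<in> Q"
      and y: "y = c + L z2 - w2" "w2 \<in> Q"
    have "u *\<^sub>R w1 + v *\<^sub>R w2 \<in> Q" using Qconv x(2) y(2) uv unfolding convex_def by blast
    moreover have "u *\<^sub>R x + v *\<^sub>R y = c + L (u *\<^sub>R z1 + v *\<^sub>R z2) - (u *\<^sub>R w1 + v *\<^sub>R w2)"
    proof -
      have "u *\<^sub>R x + v *\<^sub>R y = (u + v) *\<^sub>R c + (u *\<^sub>R L z1 + v *\<^sub>R L z2) - (u *\<^sub>R w1 + v *\<^sub>R w2)"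
        unfolding x y by (simp add: algebra_simps)
      also have "\<dots> = c + L (u *\<^sub>R z1 + v *\<^sub>R z2) - (u *\<^sub>R w1 + v *\<^sub>R w2)"
        using uv(3) linL by (simp add: linear_add linear_cmul)
      finally show ?thesis .
    qed
    ultimately show "u *\<^sub>R x + v *\<^sub>R y \<in> {c + L z - w |z w. w \<in> Q}" by blast
  qed
  have "0 \<notin> closure C"
  proof
    assume "0 \<in> closure C"
    then obtain y where "y \<in> C" "dist y 0 < \<epsilon>" using closure_approachable \<epsilon>pos by blast
    then obtain z w where zw: "w \<in> Q" "dist (c + L z - w) 0 < \<epsilon>" unfolding C_def by blast
    moreover have "dist (c + L z - w) 0 = dist (c + L z) w" by (simp add: dist_norm)
    ultimately show False using bound[OF zw(1), of z] by linarith
  qed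
  then obtain a b where ab0: "a \<bullet> 0 < b" and ab: "\<And>x. x \<in> closure C \<Longrightarrow> b < a \<bullet> x"
    using separating_hyperplane_closed_point[OF convex_closure[OF convC] closed_closure]
    by blast
  have b0: "b > 0" using ab0 by simp
  have main: "b < a \<bullet> (c + L z - w)" if "w \<in> Q" for z w
  proof -
    have "c + L z - w \<in> C" unfolding C_def using that by blast
    then show ?thesis using ab closure_subset by blast
  qed
  obtain a1 a2 where a: "a = (a1, a2)" by (cases a)
  have a1neg: "a1 \<bullet> k \<le> 0" and a2neg: "a2 \<bullet> k \<le> 0" if k: "k \<in> K" for k
  proof -
    have gen: "a \<bullet> q \<le> 0" if q: "q \<in> Q" for q
    proof (rule ccontr)
      assume pos: "\<not> a \<bullet> q \<le> 0"
      define t where "t = \<bar>a \<bullet> c\<bar> / (a \<bullet> q)"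
      have t0: "t \<ge> 0" using pos by (simp add: t_def)
      have "b < a \<bullet> (c + L 0 - t *\<^sub>R q)" using main[OF Qcone[OF q t0]] .
      moreover have "L 0 = 0" using linL by (simp add: linear_0)
      moreover have "t * (a \<bullet> q) = \<bar>a \<bullet> c\<bar>" using pos by (simp add: t_def)
      ultimately have "b < a \<bullet> c - \<bar>a \<bullet> c\<bar>" by (simp add: inner_diff_right)
      then show False using b0 by linarith
    qed
    show "a1 \<bullet> k \<le> 0" using gen[of "(k, 0)"] k K0 by (simp add: Q_def a)
    show "a2 \<bullet> k \<le> 0" using gen[of "(0, k)"] k K0 by (simp add: Q_def a)
  qed
  define u where "u = a1 v* M1 + a2 v* M2"
  have aL: "a \<bullet> L z = - (u \<bullet> z)" for z
    by (simp add: a L_def u_def inner_add_left dot_lmul_matrix)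
  have u0: "u = 0"
  proof (rule ccontr)
    assume "u \<noteq> 0"
    then have uu: "u \<bullet> u > 0" by simp
    define s where "s = \<bar>a \<bullet> c\<bar> / (u \<bullet> u)"
    have "b < a \<bullet> (c + L (s *\<^sub>R u) - 0)" using main Q0 by blast
    then have "b < a \<bullet> c - s * (u \<bullet> u)" by (simp add: inner_add_right aL)
    moreover have "s * (u \<bullet> u) = \<bar>a \<bullet> c\<bar>" using uu by (simp add: s_def)
    ultimately show False using b0 by linarith
  qed
  have ac: "b < a \<bullet> c"
    using main[OF Q0, of 0] linL by (simp add: linear_0)
  show ?thesis
  proof (intro bexI conjI)
    show "(- a1) v* M1 + (- a2) v* M2 = 0"
      using u0 scaleR_vector_matrix_assoc[of "-1" a1 M1] scaleR_vector_matrix_assoc[of "-1" a2 M2]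
      by (simp add: u_def neg_eq_iff_add_eq_0)
    show "(- a1) \<bullet> c1 + (- a2) \<bullet> c2 < 0" using ac b0 by (simp add: a c_def)
    show "- a1 \<in> dual_cone K" using a1neg by (simp add: dual_cone_def)
    show "- a2 \<in> dual_cone K" using a2neg by (simp add: dual_cone_def)
  qed
qed

theorem proposition1:
  fixes K :: "(real^'l) set"
    and G Gi :: "real^'n^'l"
    and g gi :: "real^'l"
    and R Ri :: "real^'n^'n"
    and p p_i :: "real^'n"
  assumes "closed K" and "convex K" and "cone K" and "interior K \<noteq> {}"
    and "conic_set K G g \<noteq> {}" and "convex (conic_set K G g)" and "compact (conic_set K G g)"
    and "conic_set K Gi gi \<noteq> {}" and "convex (conic_set K Gi gi)" and "compact (conic_set K Gi gi)"
    and "rotation_matrix R" and "rotation_matrix Ri"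
  shows "setdist (body_region K G g R p) (body_region K Gi gi Ri p_i) > 0 \<longleftrightarrow>
    (\<exists>lam\<in>dual_cone K. \<exists>nu\<in>dual_cone K.
        - (lam \<bullet> (G *v (transpose R *v (p - p_i)) + g)) - nu \<bullet> gi > 0
      \<and> norm ((lam v* G) v* transpose R) \<le> 1
      \<and> (lam v* G) v* transpose R = - ((nu v* Gi) v* transpose Ri))"
proof -
  define S where "S = body_region K G g R p"
  define Si where "Si = body_region K Gi gi Ri p_i"
  have Sc: "compact S" unfolding S_def by (rule region_compact) (rule assms(7))
  have Sic: "compact Si" unfolding Si_def by (rule region_compact) (rule assms(10))
  have Sne: "S \<noteq> {}" unfolding S_def region_image using assms(5) by simp
  have Sine: "Si \<noteq> {}" unfolding Si_def region_image using assms(8) by simp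
  have Ke: "K \<noteq> {}" using assms(4) interior_subset by blast
  have memS: "z \<in> S \<longleftrightarrow> g - G *v (transpose R *v (z - p)) \<in> K" for z
    unfolding S_def by (rule mem_region[OF assms(11)])
  have memSi: "z \<in> Si \<longleftrightarrow> gi - Gi *v (transpose Ri *v (z - p_i)) \<in> K" for z
    unfolding Si_def by (rule mem_region[OF assms(12)])
  have step1: "setdist S Si > 0 \<longleftrightarrow> S \<inter> Si = {}"
    using setdist_gt_0_compact_closed[OF Sc compact_imp_closed[OF Sic]] Sne Sine by blast
  define M1 where "M1 = G ** transpose R"
  define M2 where "M2 = Gi ** transpose Ri"
  have uM1: "(lam v* G) v* transpose R = lam v* M1" for lam
    unfolding M1_def by (rule vector_matrix_mul_assoc)
  have uM2: "(lam v* Gi) v* transpose Ri = lam v* M2" for lam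
    unfolding M2_def by (rule vector_matrix_mul_assoc)
  have GM1: "G *v (transpose R *v x) = M1 *v x" for x
    unfolding M1_def by (rule matrix_vector_mul_assoc)
  have GM2: "Gi *v (transpose Ri *v x) = M2 *v x" for x
    unfolding M2_def by (rule matrix_vector_mul_assoc)
  have key: "- (lam \<bullet> (G *v (transpose R *v (p - p_i)) + g)) - nu \<bullet> gi
      = - (lam \<bullet> (g + M1 *v p) + nu \<bullet> (gi + M2 *v p_i))"
    if eq: "lam v* M1 = - (nu v* M2)" for lam nu
  proof -
    have "lam \<bullet> (M1 *v p_i) = - (nu \<bullet> (M2 *v p_i))"
      using eq by (metis dot_lmul_matrix inner_minus_left)
    then show ?thesis unfolding GM1
      by (simp add: matrix_vector_mult_diff_distrib inner_add_right inner_diff_right)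
  qed
  have step2: "S \<inter> Si = {} \<longleftrightarrow>
    (\<exists>lam\<in>dual_cone K. \<exists>nu\<in>dual_cone K.
        - (lam \<bullet> (G *v (transpose R *v (p - p_i)) + g)) - nu \<bullet> gi > 0
      \<and> norm ((lam v* G) v* transpose R) \<le> 1
      \<and> (lam v* G) v* transpose R = - ((nu v* Gi) v* transpose Ri))"
  proof
    assume disj: "S \<inter> Si = {}"
    have infeas: "\<not> ((g + M1 *v p) - M1 *v z \<in> K \<and> (gi + M2 *v p_i) - M2 *v z \<in> K)" for z
    proof
      assume h: "(g + M1 *v p) - M1 *v z \<in> K \<and> (gi + M2 *v p_i) - M2 *v z \<in> K"
      have e1: "(g + M1 *v p) - M1 *v z = g - G *v (transpose R *v (z - p))"
        unfolding GM1 by (simp add: matrix_vector_mult_diff_distrib)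
      have e2: "(gi + M2 *v p_i) - M2 *v z = gi - Gi *v (transpose Ri *v (z - p_i))"
        unfolding GM2 by (simp add: matrix_vector_mult_diff_distrib)
      have "z \<in> S" using h e1 memS[of z] by metis
      moreover have "z \<in> Si" using h e2 memSi[of z] by metis
      ultimately
      show False using disj by blast
    qed
    have rec: "v = 0" if "- (M1 *v v) \<in> K" for v
    proof -
      have "- (G *v (transpose R *v v)) \<in> K" using that unfolding GM1 .
      then have "transpose R *v v = 0"
        using recession_zero[OF assms(2,3,7,5)] by blast
      then have "R *v (transpose R *v v) = 0" by simp
      then show "v = 0" using rot_inv(2)[OF assms(11)] by simp
    qed
    obtain lam nu where lam: "lam \<in> dual_cone K" and nu: "nu \<in> dual_cone K"
      and eq0: "lam v* M1 + nu v* M2 = 0" and neg: "lam \<bullet> (g + M1 *v p) + nu \<bullet> (gi + M2 *v p_i) < 0"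
      using conic_sep[OF assms(1,2,3) Ke infeas rec] by blast
    have eq: "lam v* M1 = - (nu v* M2)" using eq0 by (simp add: eq_neg_iff_add_eq_0)
    define s where "s = 1 / max 1 (norm (lam v* M1))"
    have s0: "s > 0" by (simp add: s_def)
    have sn: "s * norm (lam v* M1) \<le> 1"
      unfolding s_def by (simp add: divide_le_eq_1 max_def)
    have dscale: "s *\<^sub>R y \<in> dual_cone K" if "y \<in> dual_cone K" for y
      using that s0 by (simp add: dual_cone_def)
    show "\<exists>lam\<in>dual_cone K. \<exists>nu\<in>dual_cone K.
        - (lam \<bullet> (G *v (transpose R *v (p - p_i)) + g)) - nu \<bullet> gi > 0
      \<and> norm ((lam v* G) v* transpose R) \<le> 1
      \<and> (lam v* G) v* transpose R = - ((nu v* Gi) v* transpose Ri)"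
    proof (intro bexI conjI)
      have eqs: "(s *\<^sub>R lam) v* M1 = - ((s *\<^sub>R nu) v* M2)"
        using eq by (simp add: scaleR_vector_matrix_assoc)
      show "(s *\<^sub>R lam v* G) v* transpose R = - ((s *\<^sub>R nu v* Gi) v* transpose Ri)"
        unfolding uM1 uM2 by (rule eqs)
      show "norm ((s *\<^sub>R lam v* G) v* transpose R) \<le> 1"
        unfolding uM1 scaleR_vector_matrix_assoc using sn s0 by simp
      have "- ((s *\<^sub>R lam) \<bullet> (g + M1 *v p) + (s *\<^sub>R nu) \<bullet> (gi + M2 *v p_i)) > 0"
      proof -
        have "(s *\<^sub>R lam) \<bullet> (g + M1 *v p) + (s *\<^sub>R nu) \<bullet> (gi + M2 *v p_i)
            = s * (lam \<bullet> (g + M1 *v p) + nu \<bullet> (gi + M2 *v p_i))"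
          by (simp only: inner_scaleR_left distrib_left)
        moreover have "s * (lam \<bullet> (g + M1 *v p) + nu \<bullet> (gi + M2 *v p_i)) < 0"
          by (rule mult_pos_neg[OF s0 neg])
        ultimately show ?thesis by linarith
      qed
      then show "- ((s *\<^sub>R lam) \<bullet> (G *v (transpose R *v (p - p_i)) + g)) - (s *\<^sub>R nu) \<bullet> gi > 0"
        using key[OF eqs] by simp
      show "s *\<^sub>R lam \<in> dual_cone K" using dscale lam by blast
      show "s *\<^sub>R nu \<in> dual_cone K" using dscale nu by blast
    qed
  next
    assume "\<exists>lam\<in>dual_cone K. \<exists>nu\<in>dual_cone K.
        - (lam \<bullet> (G *v (transpose R *v (p - p_i)) + g)) - nu \<bullet> gi > 0
      \<and> norm ((lam v* G) v* transpose R) \<le> 1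
      \<and> (lam v* G) v* transpose R = - ((nu v* Gi) v* transpose Ri)"
    then obtain lam nu where lam: "lam \<in> dual_cone K" and nu: "nu \<in> dual_cone K"
      and pos: "- (lam \<bullet> (G *v (transpose R *v (p - p_i)) + g)) - nu \<bullet> gi > 0"
      and eq': "(lam v* G) v* transpose R = - ((nu v* Gi) v* transpose Ri)" by blast
    have eq: "lam v* M1 = - (nu v* M2)" using eq' unfolding uM1 uM2 .
    show "S \<inter> Si = {}"
    proof (rule ccontr)
      assume "S \<inter> Si \<noteq> {}"
      then obtain z where z: "z \<in> S" "z \<in> Si" by blast
      have h1: "lam \<bullet> (g - M1 *v (z - p)) \<ge> 0"
        using lam memS[of z, unfolded GM1] z(1) by (simp add: dual_cone_def)
      have h2: "nu \<bullet> (gi - M2 *v (z - p_i)) \<ge> 0"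
        using nu memSi[of z, unfolded GM2] z(2) by (simp add: dual_cone_def)
      have a: "lam \<bullet> (M1 *v x) = - (nu \<bullet> (M2 *v x))" for x
        using eq by (metis dot_lmul_matrix inner_minus_left)
      have "lam \<bullet> (g - M1 *v (z - p)) + nu \<bullet> (gi - M2 *v (z - p_i))
          = lam \<bullet> (g + M1 *v p) + nu \<bullet> (gi + M2 *v p_i)"
        using a[of z] by (simp add: matrix_vector_mult_diff_distrib inner_add_right inner_diff_right)
      then have "- (lam \<bullet> (g + M1 *v p) + nu \<bullet> (gi + M2 *v p_i)) \<le> 0" using h1 h2 by linarith
      then show False using pos key[OF eq] by linarith
    qed
  qed
  show ?thesis using step1 step2 unfolding S_def Si_def by blast
qed

end
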